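(* Let $(X,d,\kappa)$ be a complete digital metric space where $d$ is an $\ell_p$ metric for some $1\le p\le\infty$, and let $S,T:X\to X$ be commuting maps ($S\circ T=T\circ S$) with $S(X)\subset T(X)$. If there exist $\alpha\in(0,1)$ and a positive integer $k$ such that $d(S^k(x),S^k(y))\le\alpha\, d(T(x),T(y))$ for all $x,y\in X$, then $S$ and $T$ have a common fixed point.
   Context: A digital metric space is a triple $(X,d,\kappa)$ where $X\subset\mathbb{Z}^n$ for some positive integer $n$, $\kappa$ is an adjacency relation on $X$, and $d$ is a metric on $X$. The $\ell_p$ metric on $\mathbb{Z}^n$ is $d(x,y)=(\sum_i|x_i-y_i|^p)^{1/p}$ for $1\le p<\infty$ and $\max_i|x_i-y_i|$ for $p=\infty$. $S^k$ denotes the $k$-fold composition of $S$. *)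

theory Defs
  imports "HOL-Analysis.Analysis" "HOL-Library.Extended_Real"
begin

text \<open>Points of Z^n are modelled as vectors in int^'n (the dimension n = CARD('n)
 is an arbitrary fixed positive integer).\<close>

definition lp_dist :: "ereal \<Rightarrow> int ^ 'n \<Rightarrow> int ^ 'n \<Rightarrow> real" where
  "lp_dist p x y =
     (if p = \<infinity> then Max (range (\<lambda>i. real_of_int \<bar>x $ i - y $ i\<bar>))
      else (\<Sum>i\<in>UNIV. real_of_int \<bar>x $ i - y $ i\<bar> powr real_of_ereal p)
             powr (1 / real_of_ereal p))"

definition adjacency_on :: "(int ^ 'n) set \<Rightarrow> (int ^ 'n \<Rightarrow> int ^ 'n \<Rightarrow> bool) \<Rightarrow> bool" where
  "adjacency_on X \<kappa> \<longleftrightarrow>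
     (\<forall>x\<in>X. \<forall>y\<in>X. \<kappa> x y \<longrightarrow> \<kappa> y x) \<and> (\<forall>x\<in>X. \<not> \<kappa> x x)"

definition dcauchy :: "('a \<Rightarrow> 'a \<Rightarrow> real) \<Rightarrow> (nat \<Rightarrow> 'a) \<Rightarrow> bool" where
  "dcauchy d s \<longleftrightarrow> (\<forall>e>0. \<exists>N. \<forall>m\<ge>N. \<forall>n\<ge>N. d (s m) (s n) < e)"

definition dconverges_to :: "('a \<Rightarrow> 'a \<Rightarrow> real) \<Rightarrow> (nat \<Rightarrow> 'a) \<Rightarrow> 'a \<Rightarrow> bool" where
  "dconverges_to d s l \<longleftrightarrow> (\<forall>e>0. \<exists>N. \<forall>n\<ge>N. d (s n) l < e)"

definition dcomplete :: "'a set \<Rightarrow> ('a \<Rightarrow> 'a \<Rightarrow> real) \<Rightarrow> bool" where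
  "dcomplete X d \<longleftrightarrow>
     (\<forall>s. (\<forall>n. s n \<in> X) \<longrightarrow> dcauchy d s \<longrightarrow> (\<exists>l\<in>X. dconverges_to d s l))"

end

theory Submission
  imports Defs
begin

lemma lp_dist_nonneg:
  assumes "1 \<le> p" shows "0 \<le> lp_dist p x y"
proof (cases "p = \<infinity>")
  case True
  have "0 \<le> real_of_int \<bar>x $ i - y $ i\<bar>" for i by simp
  moreover have "real_of_int \<bar>x $ i - y $ i\<bar> \<le> Max (range (\<lambda>i. real_of_int \<bar>x $ i - y $ i\<bar>))" for i
    by (rule Max_ge) auto
  ultimately have "0 \<le> Max (range (\<lambda>i. real_of_int \<bar>x $ i - y $ i\<bar>))" by (meson order_trans)
  then show ?thesis using True unfolding lp_dist_def by simp
next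
  case False
  then show ?thesis unfolding lp_dist_def by simp
qed

lemma lp_dist_ge1:
  assumes "1 \<le> p" and "x \<noteq> y" shows "1 \<le> lp_dist p x y"
proof -
  obtain i where i: "x $ i \<noteq> y $ i" using assms(2) by (metis vec_eq_iff)
  have ge: "1 \<le> real_of_int \<bar>x $ i - y $ i\<bar>" using i by linarith
  show ?thesis
  proof (cases "p = \<infinity>")
    case True
    have "real_of_int \<bar>x $ i - y $ i\<bar> \<le> Max (range (\<lambda>i. real_of_int \<bar>x $ i - y $ i\<bar>))"
      by (rule Max_ge) auto
    then have "1 \<le> Max (range (\<lambda>i. real_of_int \<bar>x $ i - y $ i\<bar>))" using ge by linarith
    then show ?thesis using True unfolding lp_dist_def by simp
  next
    case False
    define q where "q = real_of_ereal p"
    have q1: "1 \<le> q" using assms(1) False unfolding q_def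
      by (cases p) auto
    have t1: "1 \<le> real_of_int \<bar>x $ i - y $ i\<bar> powr q"
      using ge q1 by (simp add: ge_one_powr_ge_zero)
    have "real_of_int \<bar>x $ i - y $ i\<bar> powr q \<le> (\<Sum>j\<in>UNIV. real_of_int \<bar>x $ j - y $ j\<bar> powr q)"
      by (rule member_le_sum) auto
    with t1 have s1: "1 \<le> (\<Sum>j\<in>UNIV. real_of_int \<bar>x $ j - y $ j\<bar> powr q)" by linarith
    have "1 \<le> (\<Sum>j\<in>UNIV. real_of_int \<bar>x $ j - y $ j\<bar> powr q) powr (1/q)"
      using s1 q1 by (simp add: ge_one_powr_ge_zero)
    then show ?thesis using False unfolding lp_dist_def q_def by simp
  qed
qed

lemma lp_dist_zero:
  assumes "1 \<le> p" "lp_dist p x y \<le> a * lp_dist p x y" "a < 1"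
  shows "x = y"
proof (rule ccontr)
  assume "x \<noteq> y"
  then have "1 \<le> lp_dist p x y" using lp_dist_ge1 assms(1) by blast
  then have "a * lp_dist p x y < lp_dist p x y" using assms(3) by simp
  then show False using assms(2) by simp
qed

theorem corollary5p4:
  fixes X :: "(int ^ 'n) set"
    and \<kappa> :: "int ^ 'n \<Rightarrow> int ^ 'n \<Rightarrow> bool"
    and p :: ereal
    and S T :: "int ^ 'n \<Rightarrow> int ^ 'n"
    and \<alpha> :: real
    and k :: nat
  assumes X_ne: "X \<noteq> {}"
    and adj: "adjacency_on X \<kappa>"
    and p_ge: "1 \<le> p"
    and complete: "dcomplete X (lp_dist p)"
    and S_maps: "S ` X \<subseteq> X"
    and T_maps: "T ` X \<subseteq> X"
    and commute: "\<forall>x\<in>X. S (T x) = T (S x)"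
    and range_sub: "S ` X \<subseteq> T ` X"
    and alpha: "0 < \<alpha>" "\<alpha> < 1"
    and k_pos: "0 < k"
    and contr: "\<forall>x\<in>X. \<forall>y\<in>X. lp_dist p ((S ^^ k) x) ((S ^^ k) y) \<le> \<alpha> * lp_dist p (T x) (T y)"
  shows "\<exists>z\<in>X. S z = z \<and> T z = z"
proof -
  let ?d = "lp_dist p"
  let ?R = "S ^^ k"
  have SnX: "(S ^^ n) x \<in> X" if "x \<in> X" for n x
    using that by (induction n) (use S_maps in auto)
  have RX: "?R x \<in> X" if "x \<in> X" for x using SnX that by blast
  have comm: "(S ^^ n) (T x) = T ((S ^^ n) x)" if "x \<in> X" for n x
    using that
  proof (induction n)
    case 0 then show ?case by simp
  next
    case (Suc n)
    then show ?case using commute SnX[OF Suc.prems, of n] by simp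
  qed
  have RT: "?R x \<in> T ` X" if "x \<in> X" for x
  proof -
    have "?R x = S ((S ^^ (k - 1)) x)" using k_pos
      by (metis Suc_diff_1 funpow.simps(2) o_apply)
    then show ?thesis using range_sub SnX[OF that] by auto
  qed
  obtain x0 where x0: "x0 \<in> X" using X_ne by blast
  define D where "D = ?d (?R x0) (T x0)"
  have step: "\<exists>x\<in>X. ?d (?R x) (T x) \<le> \<alpha> ^ n * D" for n
  proof (induction n)
    case 0 then show ?case using x0 D_def by auto
  next
    case (Suc n)
    then obtain x where x: "x \<in> X" "?d (?R x) (T x) \<le> \<alpha> ^ n * D" by blast
    obtain x' where x': "x' \<in> X" "T x' = ?R x" using RT[OF x(1)] by (metis imageE)
    have "?d (?R x') (T x') = ?d (?R x') (?R x)" using x' by simp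
    also have "\<dots> \<le> \<alpha> * ?d (T x') (T x)" using contr x x' by blast
    also have "\<dots> = \<alpha> * ?d (?R x) (T x)" using x' by simp
    also have "\<dots> \<le> \<alpha> * (\<alpha> ^ n * D)" using x(2) alpha by simp
    finally have "?d (?R x') (T x') \<le> \<alpha> ^ Suc n * D" by (simp add: mult.assoc)
    then show ?case using x'(1) by blast
  qed
  obtain n where n: "\<alpha> ^ n * D < 1"
  proof -
    have "(\<lambda>n. \<alpha> ^ n * D) \<longlonglongrightarrow> 0 * D"
      by (intro tendsto_intros LIMSEQ_power_zero) (use alpha in auto)
    then have "eventually (\<lambda>n. \<alpha> ^ n * D < 1) sequentially"
      by (intro order_tendstoD) auto
    then show ?thesis using that by (meson eventually_sequentially order_refl)
  qed
  obtain x where x: "x \<in> X" "?d (?R x) (T x) < 1" using step[of n] n by force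
  have coin: "?R x = T x" using x(2) lp_dist_ge1[OF p_ge] by force
  define y where "y = T x"
  have yX: "y \<in> X" using T_maps x(1) y_def by auto
  have Ry: "?R y = T y" using comm[OF x(1), of k] coin y_def by simp
  have "?d (?R y) y = ?d (?R y) (?R x)" using coin y_def by simp
  also have "\<dots> \<le> \<alpha> * ?d (T y) (T x)" using contr x(1) yX by blast
  also have "\<dots> = \<alpha> * ?d (?R y) y" using Ry y_def by simp
  finally have Ryy: "?R y = y" using lp_dist_zero[OF p_ge] alpha by blast
  have Tyy: "T y = y" using Ry Ryy by simp
  define z where "z = S y"
  have zX: "z \<in> X" using S_maps yX z_def by auto
  have Rz: "?R z = z" unfolding z_def using Ryy by (metis funpow_swap1)
  have Tz: "T z = z" unfolding z_def using commute yX Tyy by metis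
  have "?d z y = ?d (?R z) (?R y)" using Rz Ryy by simp
  also have "\<dots> \<le> \<alpha> * ?d (T z) (T y)" using contr zX yX by blast
  also have "\<dots> = \<alpha> * ?d z y" using Tz Tyy by simp
  finally have "z = y" using lp_dist_zero[OF p_ge] alpha by blast
  then show ?thesis using yX Tyy z_def by auto
qed

end
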